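(* Let $G=(V,E)$ be a simple connected graph with $N\ge 2$ nodes, and let $\tilde{L}_\tau$ denote either its Mellin transformed $d$-path Laplacian $\tilde{L}_{\mathrm{Mell}}=\sum_{d=1}^{d_{max}} d^{-s}L_d$ (with parameter $s>0$) or its Laplace transformed $d$-path Laplacian $\tilde{L}_{\mathrm{Lapl}}=L+\sum_{d=2}^{d_{max}} e^{-\lambda d}L_d$ (with parameter $\lambda>0$). Then $\lambda_2(\tilde{L}_\tau)/N\to\lambda_2(L)/N$ as $s\to\infty$ (respectively $\lambda\to\infty$), and $\lambda_2(\tilde{L}_\tau)/N\to 1$ as $s\to 0$ (respectively $\lambda\to 0$).
   Context: For a simple connected graph $G=(V,E)$ with $N$ nodes, $d_{ij}$ denotes the shortest-path distance between nodes $i$ and $j$ and $d_{max}$ the diameter. $L$ is the usual graph Laplacian ($L_{ii}=k_i$ the degree, $L_{ij}=-1$ if $(i,j)\in E$, $0$ otherwise). For $1\le d\le d_{max}$, the $d$-path Laplacian $L_d$ is the $N\times N$ matrix with $(L_d)_{ij}=-1$ if $i\neq j$ and $d_{ij}=d$, $(L_d)_{ij}=0$ if $i\ne j$ and $d_{ij}\neq d$, and $(L_d)_{ii}$ equal to the number of nodes $j$ with $d_{ij}=d$; thus $L_1=L$. For such Laplacian-type matrices $M$, $0=\lambda_1(M)\le\lambda_2(M)\le\cdots\le\lambda_N(M)$ denote the eigenvalues in increasing order. *)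

theory Defs
  imports Complex_Main "Jordan_Normal_Form.Char_Poly" "HOL-Library.Multiset"
begin

definition simple_graph :: "nat \<Rightarrow> (nat \<Rightarrow> nat \<Rightarrow> bool) \<Rightarrow> bool" where
  "simple_graph N E \<longleftrightarrow> (\<forall>i j. E i j \<longrightarrow> i < N \<and> j < N) \<and>
     (\<forall>i j. E i j \<longrightarrow> E j i) \<and> (\<forall>i. \<not> E i i)"

definition walk :: "nat \<Rightarrow> (nat \<Rightarrow> nat \<Rightarrow> bool) \<Rightarrow> nat list \<Rightarrow> bool" where
  "walk N E xs \<longleftrightarrow> xs \<noteq> [] \<and> set xs \<subseteq> {..<N} \<and>
     (\<forall>k. Suc k < length xs \<longrightarrow> E (xs ! k) (xs ! Suc k))"

definition connected_graph :: "nat \<Rightarrow> (nat \<Rightarrow> nat \<Rightarrow> bool) \<Rightarrow> bool" where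
  "connected_graph N E \<longleftrightarrow> (\<forall>i<N. \<forall>j<N. \<exists>xs. walk N E xs \<and> hd xs = i \<and> last xs = j)"

text \<open>Shortest-path distance: number of edges of a shortest walk.\<close>
definition gdist :: "nat \<Rightarrow> (nat \<Rightarrow> nat \<Rightarrow> bool) \<Rightarrow> nat \<Rightarrow> nat \<Rightarrow> nat" where
  "gdist N E i j = (LEAST k. \<exists>xs. walk N E xs \<and> hd xs = i \<and> last xs = j \<and> length xs = Suc k)"

definition diameter :: "nat \<Rightarrow> (nat \<Rightarrow> nat \<Rightarrow> bool) \<Rightarrow> nat" where
  "diameter N E = Max {gdist N E i j | i j. i < N \<and> j < N}"

definition degree :: "nat \<Rightarrow> (nat \<Rightarrow> nat \<Rightarrow> bool) \<Rightarrow> nat \<Rightarrow> nat" where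
  "degree N E i = card {j. j < N \<and> E i j}"

definition laplacian :: "nat \<Rightarrow> (nat \<Rightarrow> nat \<Rightarrow> bool) \<Rightarrow> real mat" where
  "laplacian N E = mat N N (\<lambda>(i,j). if i = j then real (degree N E i)
                                     else if E i j then -1 else 0)"

definition path_laplacian :: "nat \<Rightarrow> (nat \<Rightarrow> nat \<Rightarrow> bool) \<Rightarrow> nat \<Rightarrow> real mat" where
  "path_laplacian N E d = mat N N (\<lambda>(i,j). if i = j then real (card {k. k < N \<and> gdist N E i k = d})
                                     else if gdist N E i j = d then -1 else 0)"

definition mellin_laplacian :: "nat \<Rightarrow> (nat \<Rightarrow> nat \<Rightarrow> bool) \<Rightarrow> real \<Rightarrow> real mat" where
  "mellin_laplacian N E s = mat N N (\<lambda>ij.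
     \<Sum>d = 1..diameter N E. (real d powr (- s)) * (path_laplacian N E d $$ ij))"

definition laplace_laplacian :: "nat \<Rightarrow> (nat \<Rightarrow> nat \<Rightarrow> bool) \<Rightarrow> real \<Rightarrow> real mat" where
  "laplace_laplacian N E l = mat N N (\<lambda>ij. laplacian N E $$ ij +
     (\<Sum>d = 2..diameter N E. exp (- l * real d) * (path_laplacian N E d $$ ij)))"

text \<open>Eigenvalues (with algebraic multiplicity) in increasing order, as the sorted list
  of the roots of the characteristic polynomial; lambda_k is the k-th (1-based).\<close>
definition sorted_eigenvalues :: "real mat \<Rightarrow> real list" where
  "sorted_eigenvalues M = (THE xs. sorted xs \<and> length xs = dim_row M \<and>
      (\<forall>x. count (mset xs) x = order x (char_poly M)))"

definition eig :: "nat \<Rightarrow> real mat \<Rightarrow> real" where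
  "eig k M = sorted_eigenvalues M ! (k - 1)"

end

theory Submission
  imports Defs "Jordan_Normal_Form.Schur_Decomposition"
begin


lemma sym_eig_real:
  fixes A :: "real mat"
  assumes A: "A \<in> carrier_mat n n" and sym: "\<And>i j. i < n \<Longrightarrow> j < n \<Longrightarrow> A $$ (i,j) = A $$ (j,i)"
    and ev: "eigenvalue (map_mat complex_of_real A) a"
  shows "a \<in> \<real>"
proof -
  let ?A = "map_mat complex_of_real A"
  from ev obtain v where v: "v \<in> carrier_vec n" "v \<noteq> 0\<^sub>v n" "?A *\<^sub>v v = a \<cdot>\<^sub>v v"
    unfolding eigenvalue_def eigenvector_def using A by auto
  have Av: "(?A *\<^sub>v v) $ i = (\<Sum>j<n. complex_of_real (A $$ (i,j)) * v $ j)" if "i < n" for i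
    using that A v(1) by (auto simp: scalar_prod_def lessThan_atLeast0 intro!: sum.cong)
  define q where "q = (\<Sum>i<n. \<Sum>j<n. cnj (v $ i) * complex_of_real (A $$ (i,j)) * v $ j)"
  define S where "S = (\<Sum>i<n. cnj (v $ i) * v $ i)"
  have "q = (\<Sum>i<n. cnj (v $ i) * (?A *\<^sub>v v) $ i)"
    unfolding q_def by (simp add: Av sum_distrib_left mult.assoc)
  also have "\<dots> = (\<Sum>i<n. cnj (v $ i) * (a * v $ i))"
    using v(1) by (simp add: v(3))
  also have "\<dots> = a * S" unfolding S_def by (simp add: sum_distrib_left algebra_simps)
  finally have qS: "q = a * S" .
  have "cnj q = (\<Sum>i<n. \<Sum>j<n. v $ i * complex_of_real (A $$ (i,j)) * cnj (v $ j))"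
    unfolding q_def by (simp add: cnj_sum)
  also have "\<dots> = (\<Sum>j<n. \<Sum>i<n. v $ i * complex_of_real (A $$ (i,j)) * cnj (v $ j))"
    by (rule sum.swap)
  also have "\<dots> = q" unfolding q_def
    by (intro sum.cong refl, simp add: sym mult.commute mult.left_commute)
  finally have qr: "q \<in> \<real>" using Reals_cnj_iff by blast
  have Sr: "S = complex_of_real (\<Sum>i<n. (Re (v $ i))\<^sup>2 + (Im (v $ i))\<^sup>2)"
    unfolding S_def of_real_sum by (intro sum.cong refl) (simp only: complex_mult_cnj mult.commute)
  obtain i where i: "i < n" "v $ i \<noteq> 0" using v(1,2) by (metis carrier_vecD eq_vecI index_zero_vec)
  have "(\<Sum>i<n. (Re (v $ i))\<^sup>2 + (Im (v $ i))\<^sup>2) > 0"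
    by (rule sum_pos2[of _ i], use i in \<open>auto simp: complex_neq_0\<close>)
  hence "S \<noteq> 0" unfolding Sr of_real_eq_0_iff by linarith
  hence "a = q / S" using qS by auto
  thus ?thesis using qr Sr by auto
qed



lemma map_of_real_linprod: "map_poly (complex_of_real) (\<Prod>e\<leftarrow>es. [:-e,1:]) = (\<Prod>e\<leftarrow>es. [:-complex_of_real e,1:])"
proof -
  interpret m: map_poly_comm_ring_hom "complex_of_real" ..
  show ?thesis
  proof (induct es)
    case (Cons a es)
    have "map_poly complex_of_real ([:-a,1:] * (\<Prod>e\<leftarrow>es. [:-e,1:])) =
      map_poly complex_of_real [:-a,1:] * map_poly complex_of_real (\<Prod>e\<leftarrow>es. [:-e,1:])"
      by (rule m.hom_mult)
    thus ?case using Cons by simp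
  qed simp
qed

lemma sym_char_poly_split:
  fixes A :: "real mat"
  assumes A: "A \<in> carrier_mat n n" and symA: "\<And>i j. i < n \<Longrightarrow> j < n \<Longrightarrow> A $$ (i,j) = A $$ (j,i)"
  shows "\<exists>es. char_poly A = (\<Prod>e\<leftarrow>es. [:-e,1:]) \<and> length es = n"
proof -
  let ?A = "map_mat complex_of_real A"
  have Ac: "?A \<in> carrier_mat n n" using A by auto
  obtain as where as: "char_poly ?A = (\<Prod>a\<leftarrow>as. [:- a, 1:])" "length as = n"
    using char_poly_factorized[OF Ac] by blast
  have real: "a \<in> \<real>" if "a \<in> set as" for a
  proof -
    have "poly (char_poly ?A) a = 0" unfolding as(1) using that
      by (simp add: poly_prod_list prod_list_zero_iff)
    hence "eigenvalue ?A a" using eigenvalue_root_char_poly[OF Ac] by simp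
    thus ?thesis using sym_eig_real[OF A symA] by blast
  qed
  define es where "es = map Re as"
  have "map_poly complex_of_real (\<Prod>e\<leftarrow>es. [:-e,1:]) = (\<Prod>a\<leftarrow>as. [:- a, 1:])"
    unfolding map_of_real_linprod es_def using real
    by (induct as) (auto simp: Reals_def)
  also have "\<dots> = map_poly complex_of_real (char_poly A)"
  proof -
    have "char_poly (map_mat complex_of_real A) = map_poly complex_of_real (char_poly A)"
      by (rule of_real_hom.char_poly_hom[OF A])
    thus ?thesis using as(1) by simp
  qed
  finally have "char_poly A = (\<Prod>e\<leftarrow>es. [:-e,1:])"
    by (intro poly_eqI) (metis of_real_hom.coeff_map_poly_hom of_real_eq_iff)
  moreover have "length es = n" using as(2) es_def by auto
  ultimately show ?thesis by blast
qed



lemma conj_real_vec[simp]: "conjugate (v::real vec) = v"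
  by (auto intro!: eq_vecI)

lemma deflate:
  fixes A :: "real mat"
  assumes A: "A \<in> carrier_mat n n" and symA: "transpose_mat A = A" and n: "n \<noteq> 0"
    and e: "eigenvalue A e"
  shows "\<exists>W A3. W \<in> carrier_mat n n \<and> transpose_mat W * W = 1\<^sub>m n \<and> W * transpose_mat W = 1\<^sub>m n \<and>
     A3 \<in> carrier_mat (n-1) (n-1) \<and> transpose_mat A3 = A3 \<and>
     transpose_mat W * A * W = four_block_mat (mat 1 1 (\<lambda>_. e)) (0\<^sub>m 1 (n-1)) (0\<^sub>m (n-1) 1) A3"
proof -
  define v where "v = find_eigenvector A e"
  define b where "b = basis_completion v"
  define ws where "ws = gram_schmidt n b"
  from find_eigenvector[OF A e] have ev: "eigenvector A v e" unfolding v_def .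
  from this[unfolded eigenvector_def]
  have v[simp]: "v \<in> carrier_vec n" and v0: "v \<noteq> 0\<^sub>v n" and Av: "A *\<^sub>v v = e \<cdot>\<^sub>v v" using A by auto
  interpret cof_vec_space n "TYPE(real)" .
  from basis_completion[OF v v0, folded b_def]
  have span_b: "span (set b) = carrier_vec n" and dist_b: "distinct b" 
    and indep: "\<not> lin_dep (set b)" and b: "set b \<subseteq> carrier_vec n" and hdb: "hd b = v" 
    and len_b: "length b = n" by auto
  from hdb len_b n obtain vs where bv: "b = v # vs" by (cases b, auto)
  from gram_schmidt_result[OF b dist_b indep refl, folded ws_def]
  have ws: "set ws \<subseteq> carrier_vec n" "corthogonal ws" "length ws = n" 
    by (auto simp: len_b)
  from gram_schmidt_hd[OF v, of vs, folded bv] have hdws: "hd ws = v" unfolding ws_def .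
  have ws0: "ws ! 0 = v" using hdws ws(3) n by (metis hd_conv_nth list.size(3))
  have wsc: "ws ! i \<in> carrier_vec n" if "i < n" for i using ws that by auto
  have wsij: "ws ! i \<bullet> ws ! j = 0" if "i < n" "j < n" "i \<noteq> j" for i j
    using corthogonalD[OF ws(2)] that ws(3) by auto
  have wsii: "ws ! i \<bullet> ws ! i > 0" if "i < n" for i
  proof -
    have "ws ! i \<bullet> ws ! i \<noteq> 0" using corthogonalD[OF ws(2)] that ws(3) by auto
    moreover have "ws ! i \<bullet> ws ! i \<ge> 0" using conjugate_square_ge_0_vec[of "ws ! i"] by simp
    ultimately show ?thesis by linarith
  qed
  define c where "c i = 1 / sqrt (ws ! i \<bullet> ws ! i)" for i
  define us where "us = map (\<lambda>i. c i \<cdot>\<^sub>v ws ! i) [0..<n]"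
  have lus: "length us = n" unfolding us_def by simp
  have usi: "us ! i = c i \<cdot>\<^sub>v ws ! i" if "i < n" for i unfolding us_def using that by simp
  have usc: "us ! i \<in> carrier_vec n" if "i < n" for i using usi[OF that] wsc[OF that] by simp
  have usij: "us ! i \<bullet> us ! j = (if i = j then 1 else 0)" if "i < n" "j < n" for i j
  proof -
    have "us ! i \<bullet> us ! j = c i * c j * (ws ! i \<bullet> ws ! j)"
      unfolding usi[OF that(1)] usi[OF that(2)] using wsc[OF that(1)] wsc[OF that(2)]
      by (simp add: smult_scalar_prod_distrib scalar_prod_smult_distrib)
    also have "\<dots> = (if i = j then 1 else 0)"
    proof (cases "i = j")
      case True
      have p: "ws ! i \<bullet> ws ! i > 0" using wsii that by auto
      have "c i * c i * (ws ! i \<bullet> ws ! i) = 1" unfolding c_def using p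
        by (simp add: field_simps)
      thus ?thesis using True by simp
    qed (use wsij that in auto)
    finally show ?thesis .
  qed
  define W where "W = mat_of_cols n us"
  have W: "W \<in> carrier_mat n n" unfolding W_def using mat_of_cols_carrier(1)[of n us] lus by auto
  have colW: "col W i = us ! i" if "i < n" for i unfolding W_def
    using col_mat_of_cols[of i us n] lus usc that by auto
  have WTW: "transpose_mat W * W = 1\<^sub>m n"
    by (rule eq_matI, insert W, auto simp: colW usij)
  have WWT: "W * transpose_mat W = 1\<^sub>m n"
    by (rule mat_mult_left_right_inverse[OF _ W WTW], insert W, auto)
  define A' where "A' = transpose_mat W * A * W"
  have A': "A' \<in> carrier_mat n n" unfolding A'_def using W A by auto
  have symA': "transpose_mat A' = A'"
    unfolding A'_def using W A symA
    by (simp add: transpose_mult[of _ n n _ n] assoc_mult_mat[of _ n n _ n _ n])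
  have Aus0: "A *\<^sub>v us ! 0 = e \<cdot>\<^sub>v us ! 0"
    using usi[of 0] n ws0 Av A by (simp add: mult_mat_vec[OF A v] smult_smult_assoc mult.commute)
  have col0: "A' $$ (i, 0) = (if i = 0 then e else 0)" if "i < n" for i
  proof -
    have "A' $$ (i, 0) = (transpose_mat W * (A * W)) $$ (i, 0)"
      unfolding A'_def using W A by (simp add: assoc_mult_mat[of _ n n _ n _ n])
    also have "\<dots> = row (transpose_mat W) i \<bullet> col (A * W) 0" using that n W A by simp
    also have "\<dots> = us ! i \<bullet> (A *\<^sub>v us ! 0)"
    proof -
      have r: "row (transpose_mat W) i = us ! i" using that W colW by simp
      have cc: "col (A * W) 0 = A *\<^sub>v us ! 0" using col_mult2[OF A W, of 0] n colW[of 0] by simp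
      show ?thesis unfolding r cc ..
    qed
    also have "\<dots> = e * (us ! i \<bullet> us ! 0)" unfolding Aus0
      using usc[OF that] usc[of 0] n by (simp add: scalar_prod_smult_distrib)
    finally show ?thesis using usij[OF that, of 0] n by simp
  qed
  define A3 where "A3 = mat (n-1) (n-1) (\<lambda>(i,j). A' $$ (Suc i, Suc j))"
  have A3: "A3 \<in> carrier_mat (n-1) (n-1)" unfolding A3_def by simp
  have symA3: "transpose_mat A3 = A3"
  proof (rule eq_matI)
    fix i j assume "i < dim_row A3" "j < dim_col A3"
    hence ij: "Suc i < n" "Suc j < n" unfolding A3_def by auto
    have "A' $$ (Suc j, Suc i) = A' $$ (Suc i, Suc j)"
      using arg_cong[OF symA', of "\<lambda>M. M $$ (Suc i, Suc j)"] A' ij by simp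
    thus "transpose_mat A3 $$ (i, j) = A3 $$ (i, j)" using ij unfolding A3_def by simp
  qed (auto simp: A3_def)
  have blk: "A' = four_block_mat (mat 1 1 (\<lambda>_. e)) (0\<^sub>m 1 (n-1)) (0\<^sub>m (n-1) 1) A3"
  proof (rule eq_matI)
    fix i j assume ij: "i < dim_row (four_block_mat (mat 1 1 (\<lambda>_. e)) (0\<^sub>m 1 (n-1)) (0\<^sub>m (n-1) 1) A3)"
      "j < dim_col (four_block_mat (mat 1 1 (\<lambda>_. e)) (0\<^sub>m 1 (n-1)) (0\<^sub>m (n-1) 1) A3)"
    hence i: "i < n" and j: "j < n" using n A3 by auto
    have sym': "A' $$ (0, j) = A' $$ (j, 0)"
      using arg_cong[OF symA', of "\<lambda>M. M $$ (j, 0)"] A' i j n by simp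
    show "A' $$ (i, j) = four_block_mat (mat 1 1 (\<lambda>_. e)) (0\<^sub>m 1 (n-1)) (0\<^sub>m (n-1) 1) A3 $$ (i, j)"
      using i j A3 col0[OF i] col0[OF j] sym' by (auto simp: A3_def)
  qed (use A' A3 n in auto)
  show ?thesis
    by (rule exI[of _ W], rule exI[of _ A3], use W WTW WWT A3 symA3 blk A'_def in auto)
qed



definition diagm :: "real list \<Rightarrow> real mat" where
  "diagm ds = mat (length ds) (length ds) (\<lambda>(i,j). if i = j then ds ! i else 0)"

lemma diagm_carrier[simp]: "diagm ds \<in> carrier_mat (length ds) (length ds)"
  unfolding diagm_def by simp

lemma length_char_poly_lin:
  assumes A: "(A::real mat) \<in> carrier_mat n n" and c: "char_poly A = (\<Prod>e\<leftarrow>es. [:-e,1:])"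
  shows "length es = n"
proof -
  have "Polynomial.degree (char_poly A) = n" using degree_monic_char_poly[OF A] by simp
  moreover have "Polynomial.degree (\<Prod>e\<leftarrow>es. [:-e,1:]) = length es"
    using degree_linear_factors[of uminus es] by simp
  ultimately show ?thesis using c by simp
qed

lemma spectral_aux:
  assumes "(A::real mat) \<in> carrier_mat n n" "transpose_mat A = A" "char_poly A = (\<Prod>e\<leftarrow>es. [:-e,1:])"
  shows "\<exists>U. U \<in> carrier_mat n n \<and> transpose_mat U * U = 1\<^sub>m n \<and> A = U * diagm es * transpose_mat U"
  using assms
proof (induct es arbitrary: n A)
  case Nil
  have n: "n = 0" using length_char_poly_lin[OF Nil(1,3)] by simp
  show ?case
    by (rule exI[of _ "1\<^sub>m n"], insert Nil(1) n, auto intro!: eq_matI simp: diagm_def)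
next
  case (Cons e es n A)
  note A = Cons(2) and symA = Cons(3) and cp = Cons(4)
  have len: "length (e # es) = n" by (rule length_char_poly_lin[OF A cp])
  hence n: "n \<noteq> 0" and les: "length es = n - 1" by auto
  have "poly (char_poly A) e = 0" unfolding cp by (simp add: poly_prod_list prod_list_zero_iff)
  hence ev: "eigenvalue A e" using eigenvalue_root_char_poly[OF A] by simp
  from deflate[OF A symA n ev] obtain W A3 where W: "W \<in> carrier_mat n n"
    and WTW: "transpose_mat W * W = 1\<^sub>m n" and WWT: "W * transpose_mat W = 1\<^sub>m n"
    and A3: "A3 \<in> carrier_mat (n-1) (n-1)" and symA3: "transpose_mat A3 = A3"
    and blk: "transpose_mat W * A * W = four_block_mat (mat 1 1 (\<lambda>_. e)) (0\<^sub>m 1 (n-1)) (0\<^sub>m (n-1) 1) A3"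
    by blast
  define A1 where "A1 = mat 1 1 (\<lambda>_. e)"
  have A1: "A1 \<in> carrier_mat 1 1" unfolding A1_def by simp
  define A' where "A' = transpose_mat W * A * W"
  have sim: "similar_mat A A'"
  proof (rule similar_matI[of A A' W "transpose_mat W" n])
    show "{A, A', W, transpose_mat W} \<subseteq> carrier_mat n n" using A W unfolding A'_def by auto
    show "A = W * A' * transpose_mat W"
    proof -
      have "W * A' * transpose_mat W = (W * transpose_mat W) * A * (W * transpose_mat W)"
        unfolding A'_def using A W
        by (simp add: assoc_mult_mat[of _ n n _ n _ n])
      thus ?thesis using WWT A by simp
    qed
  qed (use WTW WWT in auto)
  have "char_poly A = char_poly A'" by (rule char_poly_similar[OF sim])
  also have "\<dots> = char_poly A1 * char_poly A3" unfolding A'_def blk A1_def[symmetric]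
    by (rule char_poly_four_block_zeros_col[OF A1 _ A3], auto)
  also have "char_poly A1 = [: -e,1 :]"
    by (simp add: A1_def char_poly_defs det_def sign_def)
  finally have "[: -e,1 :] * char_poly A3 = [: -e,1 :] * (\<Prod>e\<leftarrow>es. [:-e,1:])" using cp by simp
  hence cp3: "char_poly A3 = (\<Prod>e\<leftarrow>es. [:-e,1:])"
    by (metis mult_cancel_left pCons_eq_0_iff zero_neq_one)
  from Cons(1)[OF A3 symA3 cp3] obtain U3 where U3: "U3 \<in> carrier_mat (n-1) (n-1)"
    and U3TU3: "transpose_mat U3 * U3 = 1\<^sub>m (n-1)" and A3eq: "A3 = U3 * diagm es * transpose_mat U3"
    by blast
  define Bm where "Bm = four_block_mat (1\<^sub>m 1) (0\<^sub>m 1 (n-1)) (0\<^sub>m (n-1) 1) U3"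
  have Bm: "Bm \<in> carrier_mat n n" unfolding Bm_def using U3 n by auto
  have BmT: "transpose_mat Bm = four_block_mat (1\<^sub>m 1) (0\<^sub>m 1 (n-1)) (0\<^sub>m (n-1) 1) (transpose_mat U3)"
    unfolding Bm_def by (subst transpose_four_block_mat[of _ 1 1 _ "n-1" _ "n-1"], insert U3, auto)
  have D: "diagm (e # es) = four_block_mat A1 (0\<^sub>m 1 (n-1)) (0\<^sub>m (n-1) 1) (diagm es)"
    by (rule eq_matI, insert les n, auto simp: diagm_def A1_def)
  have BTB: "transpose_mat Bm * Bm = 1\<^sub>m n"
  proof -
    have "transpose_mat Bm * Bm = four_block_mat (1\<^sub>m 1) (0\<^sub>m 1 (n-1)) (0\<^sub>m (n-1) 1) (transpose_mat U3 * U3)"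
      unfolding BmT unfolding Bm_def
      by (subst mult_four_block_mat[of _ 1 1 _ "n-1" _ "n-1" _ _ 1 _ "n-1"], insert U3, auto)
    also have "\<dots> = 1\<^sub>m n" unfolding U3TU3 using n by simp
    finally show ?thesis .
  qed
  have dg: "diagm es \<in> carrier_mat (n-1) (n-1)" using diagm_carrier[of es] les by simp
  have BDB: "Bm * diagm (e # es) * transpose_mat Bm = four_block_mat A1 (0\<^sub>m 1 (n-1)) (0\<^sub>m (n-1) 1) A3"
  proof -
    have "Bm * diagm (e # es) = four_block_mat A1 (0\<^sub>m 1 (n-1)) (0\<^sub>m (n-1) 1) (U3 * diagm es)"
      unfolding D Bm_def
      by (subst mult_four_block_mat[of _ 1 1 _ "n-1" _ "n-1" _ _ 1 _ "n-1"], insert U3 A1 dg, auto)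
    hence "Bm * diagm (e # es) * transpose_mat Bm = four_block_mat A1 (0\<^sub>m 1 (n-1)) (0\<^sub>m (n-1) 1) (U3 * diagm es) * four_block_mat (1\<^sub>m 1) (0\<^sub>m 1 (n-1)) (0\<^sub>m (n-1) 1) (transpose_mat U3)"
      unfolding BmT by simp
    also have "\<dots> = four_block_mat A1 (0\<^sub>m 1 (n-1)) (0\<^sub>m (n-1) 1) (U3 * diagm es * transpose_mat U3)"
      by (subst mult_four_block_mat[of _ 1 1 _ "n-1" _ "n-1" _ _ 1 _ "n-1"], insert U3 A1 dg, auto)
    finally show ?thesis unfolding A3eq .
  qed
  define U where "U = W * Bm"
  have U: "U \<in> carrier_mat n n" unfolding U_def using W Bm by auto
  have UTU: "transpose_mat U * U = 1\<^sub>m n"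
  proof -
    have "transpose_mat U * U = transpose_mat Bm * (transpose_mat W * W) * Bm"
      unfolding U_def using W Bm
      by (simp add: transpose_mult[of _ n n _ n] assoc_mult_mat[of _ n n _ n _ n])
    also have "\<dots> = 1\<^sub>m n" using WTW BTB Bm by simp
    finally show ?thesis .
  qed
  have "U * diagm (e # es) * transpose_mat U = W * (Bm * diagm (e # es) * transpose_mat Bm) * transpose_mat W"
    unfolding U_def using W Bm les diagm_carrier[of "e # es"] len
    by (simp add: transpose_mult[of _ n n _ n] assoc_mult_mat[of _ n n _ n _ n])
  also have "\<dots> = W * (transpose_mat W * A * W) * transpose_mat W" unfolding BDB blk A1_def ..
  also have "\<dots> = (W * transpose_mat W) * A * (W * transpose_mat W)"
    using A W by (simp add: assoc_mult_mat[of _ n n _ n _ n])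
  also have "\<dots> = A" using WWT A by simp
  finally show ?case using U UTU by metis
qed



lemma order_lin_prod: "Polynomial.order x (\<Prod>e\<leftarrow>es. [:-e,1:]) = count (mset es) (x::real)"
proof -
  have "Polynomial.order x (\<Prod>e\<leftarrow>es. [:-e,1:]) = sum_list (map (Polynomial.order x) (map (\<lambda>e. [:-e,1:]) es))"
    by (rule order_prod_list) auto
  also have "\<dots> = count (mset es) x"
    by (induct es) (auto simp: order_linear')
  finally show ?thesis .
qed

lemma sorted_eigenvalues_eq:
  assumes A: "A \<in> carrier_mat n n" and cp: "char_poly A = (\<Prod>e\<leftarrow>ds. [:-e,1:])"
    and s: "sorted ds"
  shows "sorted_eigenvalues A = ds"
  unfolding sorted_eigenvalues_def
proof (rule the_equality)
  have "length ds = n" by (rule length_char_poly_lin[OF A cp])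
  thus "sorted ds \<and> length ds = dim_row A \<and> (\<forall>x. count (mset ds) x = Polynomial.order x (char_poly A))"
    using s A by (simp add: cp order_lin_prod)
next
  fix xs assume "sorted xs \<and> length xs = dim_row A \<and> (\<forall>x. count (mset xs) x = Polynomial.order x (char_poly A))"
  hence xs: "sorted xs" "\<And>x. count (mset xs) x = count (mset ds) x" by (auto simp: cp order_lin_prod)
  have "mset xs = mset ds" using xs(2) by (rule multiset_eqI)
  hence "sort ds = xs" using xs(1) by (rule properties_for_sort)
  moreover have "sort ds = ds" using s by (simp add: sorted_sort_id)
  ultimately show "xs = ds" by simp
qed

lemma spectral:
  fixes A :: "real mat"
  assumes A: "A \<in> carrier_mat n n" and symA: "\<And>i j. i < n \<Longrightarrow> j < n \<Longrightarrow> A $$ (i,j) = A $$ (j,i)"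
  shows "\<exists>U ds. U \<in> carrier_mat n n \<and> transpose_mat U * U = 1\<^sub>m n \<and> U * transpose_mat U = 1\<^sub>m n \<and>
     length ds = n \<and> sorted ds \<and> sorted_eigenvalues A = ds \<and> A = U * diagm ds * transpose_mat U"
proof -
  obtain es where es: "char_poly A = (\<Prod>e\<leftarrow>es. [:-e,1:])" "length es = n"
    using sym_char_poly_split[OF A symA] by blast
  define ds where "ds = sort es"
  have "(\<Prod>e\<leftarrow>ds. [:-e,1:]) = (\<Prod>e\<leftarrow>es. [:-e,1:])"
    unfolding prod_mset_prod_list[symmetric] ds_def by simp
  hence cp: "char_poly A = (\<Prod>e\<leftarrow>ds. [:-e,1:])" using es by simp
  have sds: "sorted ds" unfolding ds_def by simp
  have tA: "transpose_mat A = A" by (rule eq_matI, insert A symA, auto)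
  obtain U where U: "U \<in> carrier_mat n n" "transpose_mat U * U = 1\<^sub>m n" "A = U * diagm ds * transpose_mat U"
    using spectral_aux[OF A tA cp] by blast
  have "U * transpose_mat U = 1\<^sub>m n"
    by (rule mat_mult_left_right_inverse[OF _ U(1) U(2)], insert U, auto)
  moreover have "length ds = n" using es(2) ds_def by simp
  ultimately show ?thesis using U sds sorted_eigenvalues_eq[OF A cp sds] by blast
qed



lemma diagm_dim[simp]: "dim_row (diagm ds) = length ds" "dim_col (diagm ds) = length ds"
  unfolding diagm_def by auto

definition qf :: "nat \<Rightarrow> real mat \<Rightarrow> (nat \<Rightarrow> real) \<Rightarrow> real" where
  "qf n M x = (\<Sum>i<n. \<Sum>j<n. x i * M $$ (i,j) * x j)"

definition nrm :: "nat \<Rightarrow> (nat \<Rightarrow> real) \<Rightarrow> real" where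
  "nrm n x = (\<Sum>i<n. (x i)\<^sup>2)"

definition specd :: "real mat \<Rightarrow> nat \<Rightarrow> real mat \<Rightarrow> real list \<Rightarrow> bool" where
  "specd A n U ds \<longleftrightarrow> U \<in> carrier_mat n n \<and> transpose_mat U * U = 1\<^sub>m n \<and> U * transpose_mat U = 1\<^sub>m n \<and>
     length ds = n \<and> sorted ds \<and> sorted_eigenvalues A = ds \<and> A = U * diagm ds * transpose_mat U"

lemma specd_entry:
  assumes "specd A n U ds" "i < n" "j < n"
  shows "A $$ (i,j) = (\<Sum>k<n. U $$ (i,k) * ds ! k * U $$ (j,k))"
proof -
  from assms(1) have U: "U \<in> carrier_mat n n" and l: "length ds = n" and A: "A = U * diagm ds * transpose_mat U"
    unfolding specd_def by auto
  have UD: "(U * diagm ds) $$ (i,k) = U $$ (i,k) * ds ! k" if "i < n" "k < n" for i k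
  proof -
    have "(U * diagm ds) $$ (i,k) = (\<Sum>l<n. U $$ (i,l) * (if l = k then ds ! l else 0))"
      using that U l by (auto simp: scalar_prod_def diagm_def lessThan_atLeast0 intro!: sum.cong)
    also have "\<dots> = U $$ (i,k) * ds ! k"
      by (simp add: if_distrib that cong: if_cong)
    finally show ?thesis .
  qed
  have "A $$ (i,j) = (\<Sum>k<n. (U * diagm ds) $$ (i,k) * U $$ (j,k))"
    unfolding A using U l assms(2,3) by (auto simp: scalar_prod_def lessThan_atLeast0 intro!: sum.cong)
  also have "\<dots> = (\<Sum>k<n. U $$ (i,k) * ds ! k * U $$ (j,k))"
    using UD assms(2) by simp
  finally show ?thesis .
qed

lemma specd_orth:
  assumes "specd A n U ds"
  shows "\<And>k l. k < n \<Longrightarrow> l < n \<Longrightarrow> (\<Sum>i<n. U $$ (i,k) * U $$ (i,l)) = (if k = l then 1 else 0)"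
    and "\<And>i j. i < n \<Longrightarrow> j < n \<Longrightarrow> (\<Sum>k<n. U $$ (i,k) * U $$ (j,k)) = (if i = j then 1 else 0)"
proof -
  from assms have U: "U \<in> carrier_mat n n" and o1: "transpose_mat U * U = 1\<^sub>m n" and o2: "U * transpose_mat U = 1\<^sub>m n"
    unfolding specd_def by auto
  fix k l assume kl: "k < n" "l < n"
  have "(transpose_mat U * U) $$ (k,l) = (\<Sum>i<n. U $$ (i,k) * U $$ (i,l))"
    using U kl by (auto simp: scalar_prod_def lessThan_atLeast0 intro!: sum.cong)
  thus "(\<Sum>i<n. U $$ (i,k) * U $$ (i,l)) = (if k = l then 1 else 0)" using o1 kl by simp
next
  from assms have U: "U \<in> carrier_mat n n" and o1: "transpose_mat U * U = 1\<^sub>m n" and o2: "U * transpose_mat U = 1\<^sub>m n"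
    unfolding specd_def by auto
  fix i j assume ij: "i < n" "j < n"
  have "(U * transpose_mat U) $$ (i,j) = (\<Sum>k<n. U $$ (i,k) * U $$ (j,k))"
    using U ij by (auto simp: scalar_prod_def lessThan_atLeast0 intro!: sum.cong)
  thus "(\<Sum>k<n. U $$ (i,k) * U $$ (j,k)) = (if i = j then 1 else 0)" using o2 ij by simp
qed

lemma quad_expand:
  fixes U :: "nat \<Rightarrow> nat \<Rightarrow> real"
  shows "(\<Sum>i<n. \<Sum>j<n. x i * (\<Sum>k<n. U i k * f k * U j k) * x j) =
    (\<Sum>k<n. f k * (\<Sum>i<n. U i k * x i)\<^sup>2)"
proof -
  have "(\<Sum>i<n. \<Sum>j<n. x i * (\<Sum>k<n. U i k * f k * U j k) * x j) =
        (\<Sum>i<n. \<Sum>j<n. \<Sum>k<n. f k * (U i k * x i) * (U j k * x j))"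
    by (simp add: sum_distrib_left sum_distrib_right mult_ac)
  also have "\<dots> = (\<Sum>i<n. \<Sum>k<n. \<Sum>j<n. f k * (U i k * x i) * (U j k * x j))"
    by (intro sum.cong refl sum.swap)
  also have "\<dots> = (\<Sum>k<n. \<Sum>i<n. \<Sum>j<n. f k * (U i k * x i) * (U j k * x j))"
    by (rule sum.swap)
  also have "\<dots> = (\<Sum>k<n. f k * (\<Sum>i<n. U i k * x i)\<^sup>2)"
    by (simp add: power2_eq_square sum_distrib_left sum_distrib_right mult_ac)
  finally show ?thesis .
qed

lemma specd_qf:
  assumes "specd A n U ds"
  shows "qf n A x = (\<Sum>k<n. ds ! k * (\<Sum>i<n. U $$ (i,k) * x i)\<^sup>2)"
proof -
  have "qf n A x = (\<Sum>i<n. \<Sum>j<n. x i * (\<Sum>k<n. U $$ (i,k) * ds ! k * U $$ (j,k)) * x j)"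
    unfolding qf_def using specd_entry[OF assms] by simp
  also have "\<dots> = (\<Sum>k<n. ds ! k * (\<Sum>i<n. U $$ (i,k) * x i)\<^sup>2)"
    by (rule quad_expand[where U = "\<lambda>i k. U $$ (i,k)" and f = "\<lambda>k. ds ! k"])
  finally show ?thesis .
qed

lemma specd_nrm:
  assumes "specd A n U ds"
  shows "nrm n x = (\<Sum>k<n. (\<Sum>i<n. U $$ (i,k) * x i)\<^sup>2)"
proof -
  have "(\<Sum>k<n. (\<Sum>i<n. U $$ (i,k) * x i)\<^sup>2) = (\<Sum>k<n. 1 * (\<Sum>i<n. U $$ (i,k) * x i)\<^sup>2)" by simp
  also have "\<dots> = (\<Sum>i<n. \<Sum>j<n. x i * (\<Sum>k<n. U $$ (i,k) * 1 * U $$ (j,k)) * x j)"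
    by (rule quad_expand[where U = "\<lambda>i k. U $$ (i,k)" and f = "\<lambda>k. 1", symmetric])
  also have "\<dots> = (\<Sum>i<n. \<Sum>j<n. x i * (if i = j then 1 else 0) * x j)"
    using specd_orth(2)[OF assms] by simp
  also have "\<dots> = (\<Sum>i<n. \<Sum>j<n. (if i = j then x i * x j else 0))"
    by (intro sum.cong refl) simp
  also have "\<dots> = nrm n x" unfolding nrm_def
    by (simp add: sum.delta power2_eq_square)
  finally show ?thesis by simp
qed



lemma specd_eig2: assumes "specd A n U ds" shows "eig 2 A = ds ! 1"
proof -
  have "sorted_eigenvalues A = ds" using assms unfolding specd_def by blast
  thus ?thesis unfolding eig_def by simp
qed

lemma F1:
  assumes sp: "specd B n U ms" and n: "2 \<le> n" and x0: "(\<Sum>i<n. U $$ (i,0) * x i) = 0"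
  shows "ms ! 1 * nrm n x \<le> qf n B x"
proof -
  have s: "sorted ms" and l: "length ms = n" using sp unfolding specd_def by auto
  have "ms ! 1 * nrm n x = (\<Sum>k<n. ms ! 1 * (\<Sum>i<n. U $$ (i,k) * x i)\<^sup>2)"
    unfolding specd_nrm[OF sp] by (simp add: sum_distrib_left)
  also have "\<dots> \<le> (\<Sum>k<n. ms ! k * (\<Sum>i<n. U $$ (i,k) * x i)\<^sup>2)"
  proof (rule sum_mono)
    fix k assume k: "k \<in> {..<n}"
    show "ms ! 1 * (\<Sum>i<n. U $$ (i,k) * x i)\<^sup>2 \<le> ms ! k * (\<Sum>i<n. U $$ (i,k) * x i)\<^sup>2"
    proof (cases "k = 0")
      case True thus ?thesis using x0 by simp
    next
      case False
      hence "ms ! 1 \<le> ms ! k" using sorted_nth_mono[OF s, of 1 k] k l by auto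
      thus ?thesis by (intro mult_right_mono) auto
    qed
  qed
  also have "\<dots> = qf n B x" unfolding specd_qf[OF sp] ..
  finally show ?thesis .
qed

lemma F2:
  assumes sp: "specd A n V ds" and n: "2 \<le> n" and x: "\<And>i. x i = a * V $$ (i,0) + b * V $$ (i,1)"
  shows "qf n A x \<le> ds ! 1 * nrm n x"
proof -
  have s: "sorted ds" and l: "length ds = n" using sp unfolding specd_def by auto
  have c: "(\<Sum>i<n. V $$ (i,k) * x i) = (if k = 0 then a else 0) + (if k = 1 then b else 0)" if k: "k < n" for k
  proof -
    have "(\<Sum>i<n. V $$ (i,k) * x i) = a * (\<Sum>i<n. V $$ (i,k) * V $$ (i,0)) + b * (\<Sum>i<n. V $$ (i,k) * V $$ (i,1))"
      unfolding x by (simp add: sum.distrib sum_distrib_left algebra_simps)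
    also have "\<dots> = (if k = 0 then a else 0) + (if k = 1 then b else 0)"
      using specd_orth(1)[OF sp k, of 0] specd_orth(1)[OF sp k, of 1] n by auto
    finally show ?thesis .
  qed
  have "qf n A x = (\<Sum>k<n. ds ! k * (\<Sum>i<n. V $$ (i,k) * x i)\<^sup>2)" unfolding specd_qf[OF sp] ..
  also have "\<dots> \<le> (\<Sum>k<n. ds ! 1 * (\<Sum>i<n. V $$ (i,k) * x i)\<^sup>2)"
  proof (rule sum_mono)
    fix k assume k: "k \<in> {..<n}"
    show "ds ! k * (\<Sum>i<n. V $$ (i,k) * x i)\<^sup>2 \<le> ds ! 1 * (\<Sum>i<n. V $$ (i,k) * x i)\<^sup>2"
    proof (cases "k \<le> 1")
      case True
      hence "ds ! k \<le> ds ! 1" using sorted_nth_mono[OF s, of k 1] l n by auto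
      thus ?thesis by (intro mult_right_mono) auto
    next
      case False thus ?thesis using c k by auto
    qed
  qed
  also have "\<dots> = ds ! 1 * nrm n x"
    unfolding specd_nrm[OF sp] by (simp add: sum_distrib_left)
  finally show ?thesis .
qed

lemma nrm_F2:
  assumes sp: "specd A n V ds" and n: "2 \<le> n" and x: "\<And>i. x i = a * V $$ (i,0) + b * V $$ (i,1)"
  shows "nrm n x = a\<^sup>2 + b\<^sup>2"
proof -
  have c: "(\<Sum>i<n. V $$ (i,k) * x i) = (if k = 0 then a else 0) + (if k = 1 then b else 0)" if k: "k < n" for k
  proof -
    have "(\<Sum>i<n. V $$ (i,k) * x i) = a * (\<Sum>i<n. V $$ (i,k) * V $$ (i,0)) + b * (\<Sum>i<n. V $$ (i,k) * V $$ (i,1))"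
      unfolding x by (simp add: sum.distrib sum_distrib_left algebra_simps)
    also have "\<dots> = (if k = 0 then a else 0) + (if k = 1 then b else 0)"
      using specd_orth(1)[OF sp k, of 0] specd_orth(1)[OF sp k, of 1] n by auto
    finally show ?thesis .
  qed
  have "nrm n x = (\<Sum>k<n. ((if k = 0 then a else 0) + (if k = 1 then b else 0))\<^sup>2)"
    unfolding specd_nrm[OF sp] using c by simp
  also have "\<dots> = (\<Sum>k<n. (if k = 0 then a\<^sup>2 else 0) + (if k = 1 then b\<^sup>2 else 0))"
    by (intro sum.cong refl) auto
  also have "\<dots> = a\<^sup>2 + b\<^sup>2" using n by (simp add: sum.distrib)
  finally show ?thesis .
qed

lemma qf_diff:
  assumes "2 \<le> n"
  shows "qf n B x - qf n A x \<le> (\<Sum>i<n. \<Sum>j<n. \<bar>B $$ (i,j) - A $$ (i,j)\<bar>) * nrm n x"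
proof -
  have xi: "\<bar>x i\<bar> \<le> sqrt (nrm n x)" if "i < n" for i
  proof -
    have "(x i)\<^sup>2 \<le> nrm n x" unfolding nrm_def
      by (rule member_le_sum[of i "{..<n}" "\<lambda>i. (x i)\<^sup>2"]) (use that in auto)
    thus ?thesis using real_le_rsqrt by (simp add: real_sqrt_abs[symmetric] del: real_sqrt_abs)
  qed
  have nn: "nrm n x \<ge> 0" unfolding nrm_def by (simp add: sum_nonneg)
  have "qf n B x - qf n A x = (\<Sum>i<n. \<Sum>j<n. x i * (B $$ (i,j) - A $$ (i,j)) * x j)"
    unfolding qf_def by (simp add: sum_subtractf[symmetric] algebra_simps)
  also have "\<dots> \<le> (\<Sum>i<n. \<Sum>j<n. \<bar>B $$ (i,j) - A $$ (i,j)\<bar> * nrm n x)"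
  proof (intro sum_mono)
    fix i j assume ij: "i \<in> {..<n}" "j \<in> {..<n}"
    have "x i * (B $$ (i,j) - A $$ (i,j)) * x j \<le> \<bar>x i * (B $$ (i,j) - A $$ (i,j)) * x j\<bar>" by simp
    also have "\<dots> = \<bar>B $$ (i,j) - A $$ (i,j)\<bar> * (\<bar>x i\<bar> * \<bar>x j\<bar>)" by (simp add: abs_mult)
    also have "\<dots> \<le> \<bar>B $$ (i,j) - A $$ (i,j)\<bar> * (sqrt (nrm n x) * sqrt (nrm n x))"
      by (intro mult_left_mono mult_mono xi) (use ij nn in auto)
    also have "\<dots> = \<bar>B $$ (i,j) - A $$ (i,j)\<bar> * nrm n x" using nn by simp
    finally show "x i * (B $$ (i,j) - A $$ (i,j)) * x j \<le> \<bar>B $$ (i,j) - A $$ (i,j)\<bar> * nrm n x" .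
  qed
  also have "\<dots> = (\<Sum>i<n. \<Sum>j<n. \<bar>B $$ (i,j) - A $$ (i,j)\<bar>) * nrm n x"
    by (simp add: sum_distrib_right)
  finally show ?thesis .
qed

lemma weyl2:
  fixes A B :: "real mat"
  assumes A: "A \<in> carrier_mat n n" and symA: "\<And>i j. i < n \<Longrightarrow> j < n \<Longrightarrow> A $$ (i,j) = A $$ (j,i)"
    and B: "B \<in> carrier_mat n n" and symB: "\<And>i j. i < n \<Longrightarrow> j < n \<Longrightarrow> B $$ (i,j) = B $$ (j,i)"
    and n: "2 \<le> n"
  shows "eig 2 B \<le> eig 2 A + (\<Sum>i<n. \<Sum>j<n. \<bar>B $$ (i,j) - A $$ (i,j)\<bar>)"
proof -
  obtain V ds where spA: "specd A n V ds" using spectral[OF A symA] unfolding specd_def by blast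
  obtain U ms where spB: "specd B n U ms" using spectral[OF B symB] unfolding specd_def by blast
  define \<alpha> where "\<alpha> = (\<Sum>i<n. U $$ (i,0) * V $$ (i,0))"
  define \<beta> where "\<beta> = (\<Sum>i<n. U $$ (i,0) * V $$ (i,1))"
  define a where "a = (if \<alpha> = 0 \<and> \<beta> = 0 then 1 else \<beta>)"
  define b where "b = (if \<alpha> = 0 \<and> \<beta> = 0 then 0 else - \<alpha>)"
  define x where "x i = a * V $$ (i,0) + b * V $$ (i,1)" for i
  have x0: "(\<Sum>i<n. U $$ (i,0) * x i) = 0"
  proof -
    have "(\<Sum>i<n. U $$ (i,0) * x i) = a * \<alpha> + b * \<beta>"
      unfolding x_def \<alpha>_def \<beta>_def by (simp add: sum.distrib sum_distrib_left algebra_simps)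
    thus ?thesis unfolding a_def b_def by auto
  qed
  have nx: "nrm n x = a\<^sup>2 + b\<^sup>2" by (rule nrm_F2[OF spA n]) (simp add: x_def)
  have pos: "nrm n x > 0" unfolding nx a_def b_def by (auto simp: sum_power2_gt_zero_iff)
  define S where "S = (\<Sum>i<n. \<Sum>j<n. \<bar>B $$ (i,j) - A $$ (i,j)\<bar>)"
  have "ms ! 1 * nrm n x \<le> qf n B x" by (rule F1[OF spB n x0])
  also have "\<dots> \<le> qf n A x + S * nrm n x" using qf_diff[OF n, of B x A] unfolding S_def by simp
  also have "\<dots> \<le> ds ! 1 * nrm n x + S * nrm n x"
    using F2[OF spA n, of x a b] by (simp add: x_def)
  finally have "ms ! 1 * nrm n x \<le> (ds ! 1 + S) * nrm n x" by (simp add: algebra_simps)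
  hence "ms ! 1 \<le> ds ! 1 + S" using pos by simp
  thus ?thesis using specd_eig2[OF spA] specd_eig2[OF spB] unfolding S_def by simp
qed



definition Kmat :: "nat \<Rightarrow> real mat" where
  "Kmat n = mat n n (\<lambda>(i,j). if i = j then real n - 1 else -1)"

lemma Kmat_const_col:
  assumes sp: "specd (Kmat n) n U ds" and l: "l < n" and dl: "ds ! l \<noteq> real n"
  shows "ds ! l = 0 \<and> (\<exists>c. c \<noteq> 0 \<and> (\<forall>i<n. U $$ (i,l) = c))"
proof -
  define s where "s = (\<Sum>j<n. U $$ (j,l))"
  have eq: "(real n - ds ! l) * U $$ (i,l) = s" if i: "i < n" for i
  proof -
    have "(\<Sum>j<n. Kmat n $$ (i,j) * U $$ (j,l)) = (\<Sum>j<n. \<Sum>k<n. U $$ (i,k) * ds ! k * (U $$ (j,k) * U $$ (j,l)))"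
      using specd_entry[OF sp i] by (simp add: sum_distrib_right sum_distrib_left mult_ac)
    also have "\<dots> = (\<Sum>k<n. U $$ (i,k) * ds ! k * (\<Sum>j<n. U $$ (j,k) * U $$ (j,l)))"
      by (subst sum.swap) (simp add: sum_distrib_left)
    also have "\<dots> = (\<Sum>k<n. U $$ (i,k) * ds ! k * (if k = l then 1 else 0))"
      using specd_orth(1)[OF sp _ l] by simp
    also have "\<dots> = U $$ (i,l) * ds ! l" using l by (simp add: if_distrib cong: if_cong)
    finally have a: "(\<Sum>j<n. Kmat n $$ (i,j) * U $$ (j,l)) = U $$ (i,l) * ds ! l" .
    have "(\<Sum>j<n. Kmat n $$ (i,j) * U $$ (j,l)) = (\<Sum>j<n. (if i = j then real n * U $$ (j,l) else 0) - U $$ (j,l))"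
      using i by (intro sum.cong refl) (auto simp: Kmat_def algebra_simps)
    also have "\<dots> = real n * U $$ (i,l) - s" using i unfolding s_def by (simp add: sum_subtractf sum.delta)
    finally show ?thesis using a by (simp add: algebra_simps)
  qed
  define c where "c = s / (real n - ds ! l)"
  have Uc: "U $$ (i,l) = c" if "i < n" for i
    using eq[OF that] dl unfolding c_def by (simp add: field_simps)
  have "1 = (\<Sum>i<n. U $$ (i,l) * U $$ (i,l))" using specd_orth(1)[OF sp l l] by simp
  also have "\<dots> = real n * c * c" using Uc by simp
  finally have c0: "c \<noteq> 0" by auto
  have "s = real n * c" unfolding s_def using Uc by simp
  hence "(real n - ds ! l) * c = real n * c" using eq[of 0] Uc l by (metis gr_zeroI less_nat_zero_code)
  hence "ds ! l = 0" using c0 by (simp add: algebra_simps)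
  thus ?thesis using c0 Uc by blast
qed

lemma Kmat_eig2:
  assumes n: "2 \<le> n"
  shows "eig 2 (Kmat n) = real n"
proof -
  have K: "Kmat n \<in> carrier_mat n n" unfolding Kmat_def by simp
  obtain U ds where sp: "specd (Kmat n) n U ds"
    using spectral[OF K] unfolding specd_def by (force simp: Kmat_def)
  have s: "sorted ds" and len: "length ds = n" using sp unfolding specd_def by auto
  have "ds ! 1 = real n"
  proof (rule ccontr)
    assume d1: "ds ! 1 \<noteq> real n"
    from Kmat_const_col[OF sp _ d1] n obtain c1 where c1: "ds ! 1 = 0" "c1 \<noteq> 0" "\<forall>i<n. U $$ (i,1) = c1" by auto
    have "ds ! 0 \<le> ds ! 1" using sorted_nth_mono[OF s, of 0 1] len n by auto
    hence d0: "ds ! 0 \<noteq> real n" using c1 n by auto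
    from Kmat_const_col[OF sp _ d0] n obtain c0 where c0: "c0 \<noteq> 0" "\<forall>i<n. U $$ (i,0) = c0" by auto
    have "0 = (\<Sum>i<n. U $$ (i,0) * U $$ (i,1))" using specd_orth(1)[OF sp, of 0 1] n by simp
    also have "\<dots> = real n * c0 * c1" using c0 c1 by simp
    finally show False using c0 c1 n by simp
  qed
  thus ?thesis using specd_eig2[OF sp] by simp
qed



lemma eig2_tendsto:
  fixes M :: "real \<Rightarrow> real mat"
  assumes n: "2 \<le> n"
    and Mc: "\<And>t. M t \<in> carrier_mat n n" and Ms: "\<And>t i j. i < n \<Longrightarrow> j < n \<Longrightarrow> M t $$ (i,j) = M t $$ (j,i)"
    and M0c: "M0 \<in> carrier_mat n n" and M0s: "\<And>i j. i < n \<Longrightarrow> j < n \<Longrightarrow> M0 $$ (i,j) = M0 $$ (j,i)"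
    and lim: "\<And>i j. i < n \<Longrightarrow> j < n \<Longrightarrow> ((\<lambda>t. M t $$ (i,j)) \<longlongrightarrow> M0 $$ (i,j)) F"
  shows "((\<lambda>t. eig 2 (M t)) \<longlongrightarrow> eig 2 M0) F"
proof -
  define S where "S t = (\<Sum>i<n. \<Sum>j<n. \<bar>M t $$ (i,j) - M0 $$ (i,j)\<bar>)" for t
  have S0: "(S \<longlongrightarrow> 0) F"
  proof -
    have "(S \<longlongrightarrow> (\<Sum>i<n. \<Sum>j<n. \<bar>M0 $$ (i,j) - M0 $$ (i,j)\<bar>)) F"
      unfolding S_def by (intro tendsto_intros lim) auto
    thus ?thesis by simp
  qed
  have bound: "norm (eig 2 (M t) - eig 2 M0) \<le> S t" for t
  proof -
    have 1: "eig 2 (M t) \<le> eig 2 M0 + S t"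
      unfolding S_def by (rule weyl2[OF M0c M0s Mc Ms n])
    have "eig 2 M0 \<le> eig 2 (M t) + (\<Sum>i<n. \<Sum>j<n. \<bar>M0 $$ (i,j) - M t $$ (i,j)\<bar>)"
      by (rule weyl2[OF Mc Ms M0c M0s n])
    also have "(\<Sum>i<n. \<Sum>j<n. \<bar>M0 $$ (i,j) - M t $$ (i,j)\<bar>) = S t"
      unfolding S_def by (simp add: abs_minus_commute)
    finally show ?thesis using 1 by simp
  qed
  have b2: "eig 2 M0 - S t \<le> eig 2 (M t) \<and> eig 2 (M t) \<le> eig 2 M0 + S t" for t
    using bound[of t] by (auto simp: abs_le_iff)
  show ?thesis
  proof (rule tendsto_sandwich[of "\<lambda>t. eig 2 M0 - S t" _ _ "\<lambda>t. eig 2 M0 + S t"])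
    show "\<forall>\<^sub>F t in F. eig 2 M0 - S t \<le> eig 2 (M t)"
      by (rule always_eventually) (use b2 in auto)
    show "\<forall>\<^sub>F t in F. eig 2 (M t) \<le> eig 2 M0 + S t"
      by (rule always_eventually) (use b2 in auto)
    show "((\<lambda>t. eig 2 M0 - S t) \<longlongrightarrow> eig 2 M0) F" using tendsto_diff[OF tendsto_const S0] by simp
    show "((\<lambda>t. eig 2 M0 + S t) \<longlongrightarrow> eig 2 M0) F" using tendsto_add[OF tendsto_const S0] by simp
  qed
qed

lemma exp_neg_lim:
  assumes "(c::real) > 0" shows "((\<lambda>s. exp (- (c * s))) \<longlongrightarrow> 0) at_top"
proof -
  have "filterlim (\<lambda>s. c * s) at_top at_top"
    by (rule filterlim_tendsto_pos_mult_at_top[OF tendsto_const assms filterlim_ident])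
  hence "filterlim (\<lambda>s. - (c * s)) at_bot at_top"
    by (simp add: filterlim_uminus_at_bot)
  thus ?thesis by (rule filterlim_compose[OF exp_at_bot])
qed



context
  fixes N :: nat and E :: "nat \<Rightarrow> nat \<Rightarrow> bool"
  assumes sg: "simple_graph N E" and cg: "connected_graph N E"
begin

lemma g_ex:
  assumes "i < N" "j < N"
  shows "\<exists>xs. walk N E xs \<and> hd xs = i \<and> last xs = j \<and> length xs = Suc (gdist N E i j)"
proof -
  obtain xs where xs: "walk N E xs" "hd xs = i" "last xs = j"
    using cg assms unfolding connected_graph_def by blast
  hence "length xs = Suc (length xs - 1)" unfolding walk_def by (cases xs) auto
  hence "\<exists>k. \<exists>xs. walk N E xs \<and> hd xs = i \<and> last xs = j \<and> length xs = Suc k" using xs by blast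
  thus ?thesis unfolding gdist_def by (rule LeastI_ex)
qed

lemma g_le:
  assumes "walk N E xs" "hd xs = i" "last xs = j" "length xs = Suc k"
  shows "gdist N E i j \<le> k"
  unfolding gdist_def by (rule Least_le) (use assms in blast)

lemma g_refl: "i < N \<Longrightarrow> gdist N E i i = 0"
  using g_le[of "[i]" i i 0] unfolding walk_def by auto

lemma g_zero: assumes "i < N" "j < N" "gdist N E i j = 0" shows "i = j"
proof -
  obtain xs where xs: "walk N E xs" "hd xs = i" "last xs = j" "length xs = Suc 0"
    using g_ex[OF assms(1,2)] assms(3) by auto
  then obtain a where "xs = [a]" by (cases xs) auto
  thus ?thesis using xs by auto
qed

lemma g_one: assumes "i < N" "j < N" shows "gdist N E i j = 1 \<longleftrightarrow> E i j"
proof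
  assume "gdist N E i j = 1"
  then obtain xs where xs: "walk N E xs" "hd xs = i" "last xs = j" "length xs = Suc (Suc 0)"
    using g_ex[OF assms] by auto
  then obtain a b where ab: "xs = [a, b]" by (cases xs; cases "tl xs") auto
  have "E (xs ! 0) (xs ! Suc 0)" using xs(1,4) unfolding walk_def by auto
  thus "E i j" using xs ab by auto
next
  assume e: "E i j"
  hence ij: "i \<noteq> j" using sg unfolding simple_graph_def by auto
  have "walk N E [i, j]" unfolding walk_def using assms e
    by (auto simp: less_Suc_eq nth_Cons split: nat.splits)
  hence "gdist N E i j \<le> 1" using g_le[of "[i,j]" i j 1] by auto
  moreover have "gdist N E i j \<noteq> 0" using g_zero[OF assms] ij by auto
  ultimately show "gdist N E i j = 1" by auto
qed

lemma walk_rev: assumes "walk N E xs" shows "walk N E (rev xs)"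
proof -
  have Es: "E a b \<Longrightarrow> E b a" for a b using sg unfolding simple_graph_def by auto
  show ?thesis unfolding walk_def
  proof (intro conjI allI impI)
    show "rev xs \<noteq> []" "set (rev xs) \<subseteq> {..<N}" using assms unfolding walk_def by auto
    fix k assume k: "Suc k < length (rev xs)"
    define m where "m = length xs"
    have k': "Suc k < m" using k m_def by simp
    have "E (xs ! (m - Suc (Suc k))) (xs ! Suc (m - Suc (Suc k)))"
      using assms k' unfolding walk_def m_def by auto
    moreover have "Suc (m - Suc (Suc k)) = m - Suc k" using k' by auto
    ultimately show "E (rev xs ! k) (rev xs ! Suc k)"
      using k' by (auto simp: rev_nth m_def intro: Es)
  qed
qed

lemma g_sym_le: assumes "i < N" "j < N" shows "gdist N E i j \<le> gdist N E j i"
proof -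
  obtain xs where xs: "walk N E xs" "hd xs = j" "last xs = i" "length xs = Suc (gdist N E j i)"
    using g_ex[OF assms(2,1)] by auto
  have ne: "xs \<noteq> []" using xs(1) unfolding walk_def by auto
  show ?thesis
    by (rule g_le[OF walk_rev[OF xs(1)]]) (use xs ne in \<open>auto simp: hd_rev last_rev\<close>)
qed

lemma g_sym: "i < N \<Longrightarrow> j < N \<Longrightarrow> gdist N E i j = gdist N E j i"
  using g_sym_le by (metis le_antisym)

lemma diam_set: "{gdist N E i j | i j. i < N \<and> j < N} = (\<lambda>(i,j). gdist N E i j) ` ({..<N} \<times> {..<N})"
  by auto

lemma g_leD: "i < N \<Longrightarrow> j < N \<Longrightarrow> gdist N E i j \<le> diameter N E"
  unfolding diameter_def diam_set by (rule Max_ge) auto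

lemma diam_ge1: assumes "2 \<le> N" shows "1 \<le> diameter N E"
proof -
  have "gdist N E 0 1 \<noteq> 0" using g_zero[of 0 1] assms by auto
  moreover have "gdist N E 0 1 \<le> diameter N E" using g_leD[of 0 1] assms by auto
  ultimately show ?thesis by auto
qed

end



context
  fixes N :: nat and E :: "nat \<Rightarrow> nat \<Rightarrow> bool"
  assumes sg: "simple_graph N E" and cg: "connected_graph N E" and N2: "2 \<le> N"
begin

abbreviation "D \<equiv> diameter N E"
abbreviation "PL \<equiv> path_laplacian N E"

lemma PL_entry: "i < N \<Longrightarrow> j < N \<Longrightarrow> PL d $$ (i,j) =
  (if i = j then real (card {k. k < N \<and> gdist N E i k = d}) else if gdist N E i j = d then -1 else 0)"
  unfolding path_laplacian_def by simp

lemma PL_sym: "i < N \<Longrightarrow> j < N \<Longrightarrow> PL d $$ (i,j) = PL d $$ (j,i)"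
  using g_sym[OF sg cg, of i j] by (auto simp: PL_entry)

lemma L_entry: "i < N \<Longrightarrow> j < N \<Longrightarrow> laplacian N E $$ (i,j) =
  (if i = j then real (degree N E i) else if E i j then -1 else 0)"
  unfolding laplacian_def by simp

lemma L_sym: "i < N \<Longrightarrow> j < N \<Longrightarrow> laplacian N E $$ (i,j) = laplacian N E $$ (j,i)"
  using sg unfolding simple_graph_def by (auto simp: L_entry)

lemma PL1: assumes "i < N" "j < N" shows "PL 1 $$ (i,j) = laplacian N E $$ (i,j)"
proof -
  have s: "{k. k < N \<and> gdist N E i' k = 1} = {k. k < N \<and> E i' k}" if "i' < N" for i'
    using g_one[OF sg cg] that by auto
  show ?thesis
  proof (cases "i = j")
    case True thus ?thesis using assms s[of i] by (simp add: PL_entry L_entry degree_def)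
  next
    case False thus ?thesis using assms g_one[OF sg cg assms] by (simp add: PL_entry L_entry)
  qed
qed

lemma sumPL: assumes i: "i < N" and j: "j < N" shows "(\<Sum>d = 1..D. PL d $$ (i,j)) = Kmat N $$ (i,j)"
proof (cases "i = j")
  case False
  have g: "gdist N E i j \<in> {1..D}" using g_leD[OF sg cg i j] g_zero[OF sg cg i j] False
    by (auto simp: Suc_le_eq)
  have "(\<Sum>d = 1..D. PL d $$ (i,j)) = (\<Sum>d = 1..D. if gdist N E i j = d then -1 else 0)"
    using i j False by (simp add: PL_entry)
  also have "\<dots> = -1" using g by (simp add: sum.delta)
  finally show ?thesis using i j False by (simp add: Kmat_def)
next
  case True
  define S where "S = {k. k < N \<and> k \<noteq> i}"
  have fin: "finite S" unfolding S_def by auto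
  have img: "(\<lambda>k. gdist N E i k) ` S \<subseteq> {1..D}"
  proof
    fix d assume "d \<in> (\<lambda>k. gdist N E i k) ` S"
    then obtain k where k: "k < N" "k \<noteq> i" "d = gdist N E i k" unfolding S_def by auto
    have "gdist N E i k \<noteq> 0" using g_zero[OF sg cg i k(1)] k(2) by auto
    thus "d \<in> {1..D}" using g_leD[OF sg cg i k(1)] k(3) by auto
  qed
  have "(\<Sum>d = 1..D. card {k \<in> S. gdist N E i k = d}) = card S"
    using sum.group[OF fin _ img, of "\<lambda>_. 1::nat"] by simp
  moreover have "{k \<in> S. gdist N E i k = d} = {k. k < N \<and> gdist N E i k = d}" if "d \<in> {1..D}" for d
    using that g_refl[OF sg cg i] unfolding S_def by auto
  ultimately have c: "(\<Sum>d = 1..D. card {k. k < N \<and> gdist N E i k = d}) = card S" by simp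
  have "S = {..<N} - {i}" unfolding S_def by auto
  hence cS: "card S = N - 1" using i by simp
  have "(\<Sum>d = 1..D. PL d $$ (i,j)) = (\<Sum>d = 1..D. real (card {k. k < N \<and> gdist N E i k = d}))"
    using i True by (simp add: PL_entry)
  also have "\<dots> = real (N - 1)" unfolding of_nat_sum[symmetric] c cS ..
  finally show ?thesis using i True N2 by (simp add: Kmat_def)
qed

lemma mell_entry: "i < N \<Longrightarrow> j < N \<Longrightarrow> mellin_laplacian N E s $$ (i,j) = (\<Sum>d = 1..D. real d powr (- s) * PL d $$ (i,j))"
  unfolding mellin_laplacian_def by simp

lemma lapl_entry: "i < N \<Longrightarrow> j < N \<Longrightarrow> laplace_laplacian N E l $$ (i,j) = laplacian N E $$ (i,j) + (\<Sum>d = 2..D. exp (- l * real d) * PL d $$ (i,j))"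
  unfolding laplace_laplacian_def by simp

lemma mell_sym: "i < N \<Longrightarrow> j < N \<Longrightarrow> mellin_laplacian N E s $$ (i,j) = mellin_laplacian N E s $$ (j,i)"
  by (simp add: mell_entry PL_sym)

lemma lapl_sym: "i < N \<Longrightarrow> j < N \<Longrightarrow> laplace_laplacian N E s $$ (i,j) = laplace_laplacian N E s $$ (j,i)"
  by (simp add: lapl_entry PL_sym L_sym)

lemma mell_top: assumes i: "i < N" and j: "j < N"
  shows "((\<lambda>s. mellin_laplacian N E s $$ (i,j)) \<longlongrightarrow> laplacian N E $$ (i,j)) at_top"
proof -
  have lim: "((\<lambda>s. real d powr (- s)) \<longlongrightarrow> (if d = 1 then 1 else 0)) at_top" if d: "d \<in> {1..D}" for d
  proof (cases "d = 1")
    case True thus ?thesis by simp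
  next
    case False
    hence d2: "real d > 1" using d by auto
    have "(\<lambda>s. real d powr (- s)) = (\<lambda>s. exp (- (ln (real d) * s)))"
      using d2 by (auto simp: powr_def)
    moreover have "((\<lambda>s. exp (- (ln (real d) * s))) \<longlongrightarrow> 0) at_top"
      by (rule exp_neg_lim) (use d2 in simp)
    ultimately show ?thesis using False by simp
  qed
  have "((\<lambda>s. \<Sum>d = 1..D. real d powr (- s) * PL d $$ (i,j)) \<longlongrightarrow> (\<Sum>d = 1..D. (if d = 1 then 1 else 0) * PL d $$ (i,j))) at_top"
    by (intro tendsto_sum tendsto_mult lim tendsto_const) auto
  moreover have "(\<Sum>d = 1..D. (if d = 1 then 1 else 0) * PL d $$ (i,j)) = laplacian N E $$ (i,j)"
  proof -
    have "(\<Sum>d = 1..D. (if d = 1 then 1 else 0) * PL d $$ (i,j)) = (\<Sum>d = 1..D. if d = 1 then PL d $$ (i,j) else 0)"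
      by (intro sum.cong) auto
    also have "\<dots> = PL 1 $$ (i,j)" using diam_ge1[OF sg cg N2] by (simp add: sum.delta)
    finally show ?thesis using PL1[OF i j] by simp
  qed
  ultimately show ?thesis using i j by (simp add: mell_entry)
qed

lemma mell_zero: assumes i: "i < N" and j: "j < N"
  shows "((\<lambda>s. mellin_laplacian N E s $$ (i,j)) \<longlongrightarrow> Kmat N $$ (i,j)) (at_right 0)"
proof -
  have lim: "((\<lambda>s. real d powr (- s)) \<longlongrightarrow> 1) (at_right 0)" if d: "d \<in> {1..D}" for d
  proof -
    have "((\<lambda>s. real d powr (- s)) \<longlongrightarrow> real d powr (- 0)) (at_right 0)"
      by (intro tendsto_intros) (use d in auto)
    thus ?thesis using d by simp
  qed
  have "((\<lambda>s. \<Sum>d = 1..D. real d powr (- s) * PL d $$ (i,j)) \<longlongrightarrow> (\<Sum>d = 1..D. 1 * PL d $$ (i,j))) (at_right 0)"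
    by (intro tendsto_sum tendsto_mult lim tendsto_const) auto
  thus ?thesis using i j sumPL[OF i j] by (simp add: mell_entry)
qed

lemma lapl_top: assumes i: "i < N" and j: "j < N"
  shows "((\<lambda>l. laplace_laplacian N E l $$ (i,j)) \<longlongrightarrow> laplacian N E $$ (i,j)) at_top"
proof -
  have lim: "((\<lambda>l. exp (- l * real d)) \<longlongrightarrow> 0) at_top" if d: "d \<in> {2..D}" for d
  proof -
    have "((\<lambda>l. exp (- (real d * l))) \<longlongrightarrow> 0) at_top" by (rule exp_neg_lim) (use d in auto)
    thus ?thesis by (simp add: mult.commute)
  qed
  have "((\<lambda>l. laplacian N E $$ (i,j) + (\<Sum>d = 2..D. exp (- l * real d) * PL d $$ (i,j))) \<longlongrightarrow>
     laplacian N E $$ (i,j) + (\<Sum>d = 2..D. 0 * PL d $$ (i,j))) at_top"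
    by (intro tendsto_add tendsto_sum tendsto_mult lim tendsto_const) auto
  thus ?thesis using i j by (simp add: lapl_entry)
qed

lemma lapl_zero: assumes i: "i < N" and j: "j < N"
  shows "((\<lambda>l. laplace_laplacian N E l $$ (i,j)) \<longlongrightarrow> Kmat N $$ (i,j)) (at_right 0)"
proof -
  have lim: "((\<lambda>l. exp (- l * real d)) \<longlongrightarrow> 1) (at_right 0)" for d
  proof -
    have "((\<lambda>l. exp (- l * real d)) \<longlongrightarrow> exp (- 0 * real d)) (at_right 0)"
      by (intro tendsto_intros)
    thus ?thesis by simp
  qed
  have "((\<lambda>l. laplacian N E $$ (i,j) + (\<Sum>d = 2..D. exp (- l * real d) * PL d $$ (i,j))) \<longlongrightarrow>
     laplacian N E $$ (i,j) + (\<Sum>d = 2..D. 1 * PL d $$ (i,j))) (at_right 0)"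
    by (intro tendsto_add tendsto_sum tendsto_mult lim tendsto_const)
  moreover have "laplacian N E $$ (i,j) + (\<Sum>d = 2..D. 1 * PL d $$ (i,j)) = Kmat N $$ (i,j)"
  proof -
    have "(\<Sum>d = 1..D. PL d $$ (i,j)) = PL 1 $$ (i,j) + (\<Sum>d = Suc 1..D. PL d $$ (i,j))"
      using diam_ge1[OF sg cg N2] by (simp add: sum.atLeast_Suc_atMost)
    thus ?thesis using sumPL[OF i j] PL1[OF i j] by (simp add: numeral_2_eq_2)
  qed
  ultimately show ?thesis using i j by (simp add: lapl_entry)
qed

end



theorem lemma2:
  fixes N :: nat and E :: "nat \<Rightarrow> nat \<Rightarrow> bool"
  assumes "N \<ge> 2" and "simple_graph N E" and "connected_graph N E"
  shows "((\<lambda>s. eig 2 (mellin_laplacian N E s) / real N) \<longlongrightarrow> eig 2 (laplacian N E) / real N) at_top \<and>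
     ((\<lambda>s. eig 2 (mellin_laplacian N E s) / real N) \<longlongrightarrow> 1) (at_right 0) \<and>
     ((\<lambda>l. eig 2 (laplace_laplacian N E l) / real N) \<longlongrightarrow> eig 2 (laplacian N E) / real N) at_top \<and>
     ((\<lambda>l. eig 2 (laplace_laplacian N E l) / real N) \<longlongrightarrow> 1) (at_right 0)"
proof -
  note N2 = assms(1) and sg = assms(2) and cg = assms(3)
  have Nr: "real N \<noteq> 0" using N2 by auto
  have Mc: "mellin_laplacian N E s \<in> carrier_mat N N" for s unfolding mellin_laplacian_def by simp
  have Lc: "laplace_laplacian N E s \<in> carrier_mat N N" for s unfolding laplace_laplacian_def by simp
  have Lac: "laplacian N E \<in> carrier_mat N N" unfolding laplacian_def by simp
  have Kc: "Kmat N \<in> carrier_mat N N" unfolding Kmat_def by simp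
  have Ks: "Kmat N $$ (i,j) = Kmat N $$ (j,i)" if "i < N" "j < N" for i j
    using that unfolding Kmat_def by simp
  have K1: "eig 2 (Kmat N) / real N = 1" using Kmat_eig2[OF N2] Nr by simp
  have a: "((\<lambda>s. eig 2 (mellin_laplacian N E s)) \<longlongrightarrow> eig 2 (laplacian N E)) at_top"
    by (rule eig2_tendsto[OF N2 Mc mell_sym[OF sg cg N2] Lac L_sym[OF sg cg N2] mell_top[OF sg cg N2]])
  have b: "((\<lambda>s. eig 2 (mellin_laplacian N E s)) \<longlongrightarrow> eig 2 (Kmat N)) (at_right 0)"
    by (rule eig2_tendsto[OF N2 Mc mell_sym[OF sg cg N2] Kc Ks mell_zero[OF sg cg N2]])
  have c: "((\<lambda>s. eig 2 (laplace_laplacian N E s)) \<longlongrightarrow> eig 2 (laplacian N E)) at_top"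
    by (rule eig2_tendsto[OF N2 Lc lapl_sym[OF sg cg N2] Lac L_sym[OF sg cg N2] lapl_top[OF sg cg N2]])
  have d: "((\<lambda>s. eig 2 (laplace_laplacian N E s)) \<longlongrightarrow> eig 2 (Kmat N)) (at_right 0)"
    by (rule eig2_tendsto[OF N2 Lc lapl_sym[OF sg cg N2] Kc Ks lapl_zero[OF sg cg N2]])
  show ?thesis
    using tendsto_divide[OF a tendsto_const Nr] tendsto_divide[OF b tendsto_const Nr]
      tendsto_divide[OF c tendsto_const Nr] tendsto_divide[OF d tendsto_const Nr]
    unfolding K1 by blast
qed


end
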